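(* Let $n\ge2$, let $P$ be a partial $n$-Metric on a set $X$, and let $\{x_i\}_{i\in\mathbb{N}}$ be a Cauchy sequence in $X$. If $\{x_i\}$ has a special limit in $X$, then that special limit is unique.
   Context: Notation: $\langle a\rangle^k$ denotes the $k$-tuple $(a,\dots,a)$ inserted into an argument list. A partial $n$-Metric on $X$ is a function $P:X^n\to\mathbb{R}$ such that for all $x_1,\dots,x_n,a\in X$: (1) $P(\langle x_1\rangle^n)\le P(\langle x_1\rangle^{n-1},x_2)$; (2) $P$ is invariant under permutations of its arguments; (3) $P(\langle x_1\rangle^{n-1},x_2)=P(\langle x_1\rangle^n)$ and $P(\langle x_2\rangle^{n-1},x_1)=P(\langle x_2\rangle^n)$ iff $x_1=x_2$; (4) $P(x_1,\dots,x_n)\le P(x_1,\dots,x_{n-1},a)+P(\langle a\rangle^{n-1},x_n)-P(\langle a\rangle^n)$. $X$ carries the topology generated by the balls $B_\epsilon(x)=\{y\mid P(\langle x\rangle^{n-1},y)-P(\langle x\rangle^n)<\epsilon\}$; thus $a$ is a limit of $\{x_i\}$ iff for every $\epsilon>0$ there is $N$ with $P(\langle a\rangle^{n-1},x_i)-P(\langle a\rangle^n)<\epsilon$ for all $i>N$. $\{x_i\}$ is Cauchy with central distance $r\in\mathbb{R}$ if for every $\epsilon>0$ there is $N$ such that $|P(x_{i_1},\dots,x_{i_n})-r|<\epsilon$ for all $i_1,\dots,i_n>N$. A special limit of a Cauchy sequence with central distance $r$ is a limit $a$ with $P(\langle a\rangle^n)=r$. *)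

theory Defs
  imports Complex_Main "HOL-Library.Multiset"
begin

text \<open>Arguments of P are represented as lists of length n over the carrier X.
  replicate k a plays the role of the k-tuple (a,...,a).\<close>

definition partial_nmetric :: "nat \<Rightarrow> 'a set \<Rightarrow> ('a list \<Rightarrow> real) \<Rightarrow> bool" where
  "partial_nmetric n X P \<longleftrightarrow>
     (\<forall>x1\<in>X. \<forall>x2\<in>X. P (replicate n x1) \<le> P (replicate (n-1) x1 @ [x2])) \<and>
     (\<forall>xs ys. length xs = n \<and> set xs \<subseteq> X \<and> mset ys = mset xs \<longrightarrow> P ys = P xs) \<and>
     (\<forall>x1\<in>X. \<forall>x2\<in>X.
        (P (replicate (n-1) x1 @ [x2]) = P (replicate n x1) \<and>
         P (replicate (n-1) x2 @ [x1]) = P (replicate n x2)) \<longleftrightarrow> x1 = x2) \<and>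
     (\<forall>xs a. length xs = n \<and> set xs \<subseteq> X \<and> a \<in> X \<longrightarrow>
        P xs \<le> P (butlast xs @ [a]) + P (replicate (n-1) a @ [last xs]) - P (replicate n a))"

definition nmetric_limit :: "nat \<Rightarrow> ('a list \<Rightarrow> real) \<Rightarrow> (nat \<Rightarrow> 'a) \<Rightarrow> 'a \<Rightarrow> bool" where
  "nmetric_limit n P x a \<longleftrightarrow>
     (\<forall>\<epsilon>>0. \<exists>N. \<forall>i>N. P (replicate (n-1) a @ [x i]) - P (replicate n a) < \<epsilon>)"

definition nmetric_cauchy :: "nat \<Rightarrow> ('a list \<Rightarrow> real) \<Rightarrow> (nat \<Rightarrow> 'a) \<Rightarrow> real \<Rightarrow> bool" where
  "nmetric_cauchy n P x r \<longleftrightarrow>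
     (\<forall>\<epsilon>>0. \<exists>N. \<forall>is. length is = n \<and> (\<forall>j\<in>set is. j > N) \<longrightarrow> \<bar>P (map x is) - r\<bar> < \<epsilon>)"

definition nmetric_special_limit ::
  "nat \<Rightarrow> 'a set \<Rightarrow> ('a list \<Rightarrow> real) \<Rightarrow> (nat \<Rightarrow> 'a) \<Rightarrow> real \<Rightarrow> 'a \<Rightarrow> bool" where
  "nmetric_special_limit n X P x r a \<longleftrightarrow>
     a \<in> X \<and> nmetric_limit n P x a \<and> P (replicate n a) = r"

end

theory Submission
  imports Defs
begin

lemma chain_bound:
  assumes pm: "partial_nmetric n X P" and n: "n \<ge> 2" and b: "b \<in> X" and y: "y \<in> X"
  shows "1 \<le> m \<Longrightarrow> m \<le> n \<Longrightarrow> P (replicate (n-m) b @ replicate m y)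
     \<le> P (replicate n b) + real m * (P (replicate (n-1) b @ [y]) - P (replicate n b))"
proof (induction m)
  case 0 then show ?case by simp
next
  case (Suc m)
  show ?case
  proof (cases "m = 0")
    case True then show ?thesis by simp
  next
    case False
    let ?L = "replicate (n - Suc m) b @ replicate (Suc m) y"
    have tri: "\<forall>xs a. length xs = n \<and> set xs \<subseteq> X \<and> a \<in> X \<longrightarrow>
        P xs \<le> P (butlast xs @ [a]) + P (replicate (n-1) a @ [last xs]) - P (replicate n a)"
      using pm unfolding partial_nmetric_def by (elim conjE) assumption
    have perm: "\<forall>xs ys. length xs = n \<and> set xs \<subseteq> X \<and> mset ys = mset xs \<longrightarrow> P ys = P xs"
      using pm unfolding partial_nmetric_def by (elim conjE) assumption
    have len: "length ?L = n" using Suc.prems by simp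
    have setL: "set ?L \<subseteq> X" using b y by auto
    have rs: "replicate (Suc m) y = replicate m y @ [y]" by (simp add: replicate_append_same)
    have bl: "butlast ?L = replicate (n - Suc m) b @ replicate m y"
      by (simp only: rs append_assoc[symmetric] butlast_snoc)
    have lst: "last ?L = y" by simp
    have 1: "P ?L \<le> P (butlast ?L @ [b]) + P (replicate (n-1) b @ [y]) - P (replicate n b)"
      using tri[rule_format, of ?L b] len setL b lst by simp
    let ?M = "replicate (n - m) b @ replicate m y"
    have lenM: "length ?M = n" using Suc.prems by simp
    have setM: "set ?M \<subseteq> X" using b y by auto
    have nm: "n - m = Suc (n - Suc m)" using Suc.prems by simp
    have ms: "mset (butlast ?L @ [b]) = mset ?M" unfolding bl nm by simp
    have 2: "P (butlast ?L @ [b]) = P ?M" using perm lenM setM ms by blast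
    have IH: "P ?M \<le> P (replicate n b) + real m * (P (replicate (n-1) b @ [y]) - P (replicate n b))"
      using Suc.IH False Suc.prems by simp
    show ?thesis using 1 2 IH by (simp add: algebra_simps)
  qed
qed

lemma half:
  assumes n: "n \<ge> 2"
    and pm: "partial_nmetric n X P"
    and xX: "\<forall>i. x i \<in> X"
    and ca: "nmetric_cauchy n P x r"
    and sa: "nmetric_special_limit n X P x r a"
    and sb: "nmetric_special_limit n X P x r b"
  shows "P (replicate (n-1) a @ [b]) = P (replicate n a)"
proof -
  have aX: "a \<in> X" and bX: "b \<in> X" and la: "nmetric_limit n P x a" and lb: "nmetric_limit n P x b"
    and ra: "P (replicate n a) = r" and rb: "P (replicate n b) = r"
    using sa sb unfolding nmetric_special_limit_def by auto
  have ax1: "\<forall>x1\<in>X. \<forall>x2\<in>X. P (replicate n x1) \<le> P (replicate (n-1) x1 @ [x2])"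
    using pm unfolding partial_nmetric_def by (elim conjE) assumption
  have tri: "\<forall>xs a. length xs = n \<and> set xs \<subseteq> X \<and> a \<in> X \<longrightarrow>
        P xs \<le> P (butlast xs @ [a]) + P (replicate (n-1) a @ [last xs]) - P (replicate n a)"
    using pm unfolding partial_nmetric_def by (elim conjE) assumption
  have perm: "\<forall>xs ys. length xs = n \<and> set xs \<subseteq> X \<and> mset ys = mset xs \<longrightarrow> P ys = P xs"
    using pm unfolding partial_nmetric_def by (elim conjE) assumption
  have ge: "P (replicate (n-1) a @ [b]) \<ge> r" using ax1 aX bX ra by auto
  have le: "P (replicate (n-1) a @ [b]) \<le> r + (real n + 1) * e" if e: "e > 0" for e
  proof -
    obtain N1 where N1: "\<forall>i>N1. P (replicate (n-1) a @ [x i]) - P (replicate n a) < e"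
      using la e unfolding nmetric_limit_def by blast
    obtain N2 where N2: "\<forall>i>N2. P (replicate (n-1) b @ [x i]) - P (replicate n b) < e"
      using lb e unfolding nmetric_limit_def by blast
    obtain N3 where N3: "\<forall>is. length is = n \<and> (\<forall>j\<in>set is. j > N3) \<longrightarrow> \<bar>P (map x is) - r\<bar> < e"
      using ca e unfolding nmetric_cauchy_def by blast
    define i where "i = Suc (N1 + N2 + N3)"
    define y where "y = x i"
    have yX: "y \<in> X" using xX y_def by simp
    have h1: "P (replicate (n-1) a @ [y]) < r + e" using N1[rule_format, of i] ra unfolding i_def y_def by simp
    have h2: "P (replicate (n-1) b @ [y]) - r < e" using N2[rule_format, of i] rb unfolding i_def y_def by simp
    have h3: "\<bar>P (replicate n y) - r\<bar> < e"
      using N3[rule_format, of "replicate n i"] i_def y_def by (simp add: map_replicate)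
    have cb: "P (replicate (n-(n-1)) b @ replicate (n-1) y)
       \<le> P (replicate n b) + real (n-1) * (P (replicate (n-1) b @ [y]) - P (replicate n b))"
      using chain_bound[OF pm n bX yX, of "n-1"] n by simp
    have eqn: "n - (n-1) = 1" using n by simp
    have lenM: "length (replicate 1 b @ replicate (n-1) y) = n" using n by simp
    have setM: "set (replicate 1 b @ replicate (n-1) y) \<subseteq> X" using bX yX by auto
    have "mset (replicate (n-1) y @ [b]) = mset (replicate 1 b @ replicate (n-1) y)" by simp
    hence pe: "P (replicate (n-1) y @ [b]) = P (replicate 1 b @ replicate (n-1) y)"
      using perm lenM setM by blast
    have h4: "P (replicate (n-1) y @ [b]) \<le> r + real (n-1) * e"
    proof -
      have "P (replicate (n-1) y @ [b]) \<le> r + real (n-1) * (P (replicate (n-1) b @ [y]) - r)"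
        using cb pe eqn rb by simp
      also have "\<dots> \<le> r + real (n-1) * e"
        using h2 by (intro add_left_mono mult_left_mono) auto
      finally show ?thesis .
    qed
    have lenL: "length (replicate (n-1) a @ [b]) = n" using n by simp
    have setL: "set (replicate (n-1) a @ [b]) \<subseteq> X" using aX bX by auto
    have t: "P (replicate (n-1) a @ [b]) \<le> P (replicate (n-1) a @ [y]) + P (replicate (n-1) y @ [b]) - P (replicate n y)"
      using tri[rule_format, of "replicate (n-1) a @ [b]" y] lenL setL yX by simp
    have "real (n-1) = real n - 1" using n by simp
    thus ?thesis using t h1 h3 h4 by (simp add: algebra_simps)
  qed
  have "P (replicate (n-1) a @ [b]) \<le> r"
  proof (rule ccontr)
    assume nt: "\<not> P (replicate (n-1) a @ [b]) \<le> r"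
    define d where "d = P (replicate (n-1) a @ [b]) - r"
    have d: "d > 0" using nt d_def by simp
    have "P (replicate (n-1) a @ [b]) \<le> r + (real n + 1) * (d / (2 * (real n + 1)))"
      using le[of "d / (2 * (real n + 1))"] d by simp
    also have "\<dots> = r + d/2"
    proof -
      have "real n + 1 > 0" by simp
      thus ?thesis by (simp add: field_simps)
    qed
    finally show False using d d_def by linarith
  qed
  thus ?thesis using ge ra by simp
qed

theorem theorem4p15:
  fixes n :: nat and X :: "'a set" and P :: "'a list \<Rightarrow> real"
    and x :: "nat \<Rightarrow> 'a" and r :: real and a b :: 'a
  assumes "n \<ge> 2"
    and "partial_nmetric n X P"
    and "\<forall>i. x i \<in> X"
    and "nmetric_cauchy n P x r"
    and "nmetric_special_limit n X P x r a"
    and "nmetric_special_limit n X P x r b"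
  shows "a = b"
proof -
  have 1: "P (replicate (n-1) a @ [b]) = P (replicate n a)" by (rule half[OF assms])
  have 2: "P (replicate (n-1) b @ [a]) = P (replicate n b)" by (rule half[OF assms(1-4,6,5)])
  have aX: "a \<in> X" "b \<in> X" using assms(5,6) unfolding nmetric_special_limit_def by auto
  have ax3: "\<forall>x1\<in>X. \<forall>x2\<in>X.
        (P (replicate (n-1) x1 @ [x2]) = P (replicate n x1) \<and>
         P (replicate (n-1) x2 @ [x1]) = P (replicate n x2)) \<longleftrightarrow> x1 = x2"
    using assms(2) unfolding partial_nmetric_def by (elim conjE) assumption
  show ?thesis using ax3[rule_format, OF aX] 1 2 by simp
qed

end
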